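(* Let $B\in\mathbb{R}^{n\times n}$ be symmetric and invertible, partitioned into $p\times p$ blocks $B_{st}\in\mathbb{R}^{n_s\times n_t}$, and let $\hat B$ be its strictly block upper triangular part ($\hat B_{st}=B_{st}$ if $s<t$, $0$ otherwise). For any $\beta\in(0,\frac1{\rho(B)})$ and $t\in[0,1]$, if $\lambda$ is an eigenvalue of $(\beta B)^{-1}(I_n+t\beta\hat B)$ with $\mathrm{Re}(\lambda)>0$, then $$\mathrm{Re}(\lambda)\ge\frac12+\frac{1-\beta\rho(B)}{\beta\rho(B)}>\frac12.$$
   Context: $n_1,\dots,n_p$ are positive integers with $\sum_sn_s=n$; $\rho(B)$ denotes the spectral radius of $B$. *)

theory Defs
  imports "Jordan_Normal_Form.Spectral_Radius" "Jordan_Normal_Form.Gauss_Jordan_Elimination"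
begin

text \<open>Block structure: the list ns = [n_1,...,n_p] of positive block sizes, sum n.
  Index i (0-based) lies in block s (0-based) iff
  n_1+...+n_s <= i < n_1+...+n_(s+1).\<close>
definition block_of :: "nat list \<Rightarrow> nat \<Rightarrow> nat" where
  "block_of ns i = (LEAST s. i < sum_list (take (Suc s) ns))"

definition block_strict_upper :: "nat list \<Rightarrow> real mat \<Rightarrow> real mat" where
  "block_strict_upper ns B =
     mat (dim_row B) (dim_col B)
       (\<lambda>(i,j). if block_of ns i < block_of ns j then B $$ (i,j) else 0)"

text \<open>Matrix inverse (library Gauss-Jordan inverse; only used for invertible matrices).\<close>
definition inv_mat :: "'a :: field mat \<Rightarrow> 'a mat" where
  "inv_mat A = the (mat_inverse A)"

end

theory Submission
  imports Defs
begin


lemma my_CS: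
  fixes a b :: "nat \<Rightarrow> real"
  shows "(\<Sum>i<n. a i * b i)\<^sup>2 \<le> (\<Sum>i<n. (a i)\<^sup>2) * (\<Sum>i<n. (b i)\<^sup>2)"
proof -
  have "0 \<le> (\<Sum>i<n. \<Sum>j<n. (a i * b j - a j * b i)\<^sup>2)"
    by (intro sum_nonneg) auto
  also have "\<dots> = (\<Sum>i<n. \<Sum>j<n. (a i)\<^sup>2 * (b j)\<^sup>2) + (\<Sum>i<n. \<Sum>j<n. (a j)\<^sup>2 * (b i)\<^sup>2)
       - 2 * (\<Sum>i<n. \<Sum>j<n. (a i * b i) * (a j * b j))"
    by (simp add: power2_eq_square algebra_simps sum_subtractf sum.distrib sum_distrib_left)
  also have "(\<Sum>i<n. \<Sum>j<n. (a j)\<^sup>2 * (b i)\<^sup>2) = (\<Sum>i<n. \<Sum>j<n. (a i)\<^sup>2 * (b j)\<^sup>2)"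
    by (rule sum.swap)
  also have "(\<Sum>i<n. \<Sum>j<n. (a i)\<^sup>2 * (b j)\<^sup>2) = (\<Sum>i<n. (a i)\<^sup>2) * (\<Sum>i<n. (b i)\<^sup>2)"
    by (simp add: sum_product)
  also have "(\<Sum>i<n. \<Sum>j<n. (a i * b i) * (a j * b j)) = (\<Sum>i<n. a i * b i)\<^sup>2"
    by (simp add: sum_product power2_eq_square)
  finally show ?thesis by simp
qed



definition hf :: "nat \<Rightarrow> (nat \<Rightarrow> nat \<Rightarrow> real) \<Rightarrow> complex vec \<Rightarrow> complex" where
  "hf n f y = (\<Sum>i<n. \<Sum>j<n. cnj (y$i) * complex_of_real (f i j) * y$j)"

definition nsq :: "nat \<Rightarrow> complex vec \<Rightarrow> real" where
  "nsq n y = (\<Sum>i<n. (cmod (y$i))\<^sup>2)"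

lemma nsq_nonneg: "0 \<le> nsq n y"
  unfolding nsq_def by (intro sum_nonneg) auto

lemma hf_real:
  assumes sym: "\<And>i j. i < n \<Longrightarrow> j < n \<Longrightarrow> f i j = f j i"
  shows "cnj (hf n f y) = hf n f y"
proof -
  have "cnj (hf n f y) = (\<Sum>i<n. \<Sum>j<n. y$i * complex_of_real (f i j) * cnj (y$j))"
    unfolding hf_def by simp
  also have "\<dots> = (\<Sum>j<n. \<Sum>i<n. y$i * complex_of_real (f i j) * cnj (y$j))"
    by (rule sum.swap)
  also have "\<dots> = hf n f y" unfolding hf_def
    by (intro sum.cong refl, simp add: sym mult.commute mult.left_commute)
  finally show ?thesis .
qed

lemma hf_Im: "(\<And>i j. i < n \<Longrightarrow> j < n \<Longrightarrow> f i j = f j i) \<Longrightarrow> Im (hf n f y) = 0"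
  using hf_real[of n f y] by (metis Reals_cnj_iff complex_is_Real_iff)

lemma hf_sq:
  assumes sym: "\<And>i j. i < n \<Longrightarrow> j < n \<Longrightarrow> f i j = f j i"
  shows "(cmod (hf n f y))\<^sup>2 \<le> nsq n y * Re (hf n (\<lambda>i j. \<Sum>k<n. f i k * f k j) y)"
proof -
  define w where "w k = (\<Sum>j<n. complex_of_real (f k j) * y$j)" for k
  have e1: "hf n f y = (\<Sum>i<n. cnj (y$i) * w i)"
    unfolding hf_def w_def by (simp add: sum_distrib_left mult.assoc)
  have "cmod (hf n f y) \<le> (\<Sum>i<n. cmod (y$i) * cmod (w i))"
    unfolding e1 by (rule order.trans[OF norm_sum], simp add: norm_mult)
  hence "(cmod (hf n f y))\<^sup>2 \<le> (\<Sum>i<n. cmod (y$i) * cmod (w i))\<^sup>2"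
    by (intro power_mono) auto
  also have "\<dots> \<le> nsq n y * (\<Sum>i<n. (cmod (w i))\<^sup>2)"
    unfolding nsq_def by (rule my_CS)
  also have "(\<Sum>i<n. (cmod (w i))\<^sup>2) = Re (hf n (\<lambda>i j. \<Sum>k<n. f i k * f k j) y)"
  proof -
    have "hf n (\<lambda>i j. \<Sum>k<n. f i k * f k j) y
       = (\<Sum>i<n. \<Sum>j<n. \<Sum>k<n. cnj (y$i) * complex_of_real (f i k) * (complex_of_real (f k j) * y$j))"
      unfolding hf_def by (simp add: sum_distrib_left sum_distrib_right mult.assoc)
    also have "\<dots> = (\<Sum>i<n. \<Sum>k<n. \<Sum>j<n. cnj (y$i) * complex_of_real (f i k) * (complex_of_real (f k j) * y$j))"
      by (intro sum.cong refl sum.swap)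
    also have "\<dots> = (\<Sum>k<n. \<Sum>i<n. \<Sum>j<n. cnj (y$i) * complex_of_real (f i k) * (complex_of_real (f k j) * y$j))"
      by (rule sum.swap)
    also have "\<dots> = (\<Sum>k<n. cnj (w k) * w k)"
    proof (intro sum.cong refl)
      fix k assume k: "k \<in> {..<n}"
      have c: "cnj (w k) = (\<Sum>i<n. cnj (y$i) * complex_of_real (f i k))"
        unfolding w_def using k by (simp add: sym mult.commute)
      show "(\<Sum>i<n. \<Sum>j<n. cnj (y$i) * complex_of_real (f i k) * (complex_of_real (f k j) * y$j))
          = cnj (w k) * w k"
        unfolding c unfolding w_def sum_product by simp
    qed
    also have "\<dots> = (\<Sum>k<n. complex_of_real ((cmod (w k))\<^sup>2))"
      by (intro sum.cong refl, simp add: complex_norm_square mult.commute del: of_real_power)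
    finally show ?thesis by simp
  qed
  finally show ?thesis .
qed



abbreviation hfm :: "nat \<Rightarrow> real mat \<Rightarrow> complex vec \<Rightarrow> complex" where
  "hfm n S y \<equiv> hf n (\<lambda>i j. S $$ (i,j)) y"

lemma mat_mult_entry:
  assumes "A \<in> carrier_mat n n" "B \<in> carrier_mat n n" "i < n" "j < n"
  shows "(A * B) $$ (i,j) = (\<Sum>k<n. A $$ (i,k) * B $$ (k,j))"
  using assms by (simp add: scalar_prod_def atLeast0LessThan)

lemma pow_add_mat:
  assumes S: "S \<in> carrier_mat n n"
  shows "S ^\<^sub>m a * S ^\<^sub>m b = S ^\<^sub>m (a + b)"
proof (induct b)
  case 0 then show ?case using S by simp
next
  case (Suc b)
  have "S ^\<^sub>m a * S ^\<^sub>m Suc b = S ^\<^sub>m a * (S ^\<^sub>m b * S)" by simp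
  also have "\<dots> = (S ^\<^sub>m a * S ^\<^sub>m b) * S"
    using S by (simp add: assoc_mult_mat[of _ n n _ n _ n])
  finally show ?case using Suc by simp
qed

lemma pow_one_mat: "S \<in> carrier_mat n n \<Longrightarrow> S ^\<^sub>m 1 = S"
  by simp

lemma transpose_pow_sym:
  fixes S :: "real mat"
  assumes S: "S \<in> carrier_mat n n" and sym: "transpose_mat S = S"
  shows "transpose_mat (S ^\<^sub>m k) = S ^\<^sub>m k"
proof (induct k)
  case 0 then show ?case using S by simp
next
  case (Suc k)
  have "transpose_mat (S ^\<^sub>m Suc k) = transpose_mat S * transpose_mat (S ^\<^sub>m k)"
    using transpose_mult[OF pow_carrier_mat[OF S] S] by simp
  also have "\<dots> = S ^\<^sub>m 1 * S ^\<^sub>m k" using Suc sym S by simp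
  also have "\<dots> = S ^\<^sub>m Suc k" using pow_add_mat[OF S, of 1 k] by simp
  finally show ?case .
qed

lemma sym_entry:
  assumes S: "S \<in> carrier_mat n n" and sym: "transpose_mat S = S" and "i < n" "j < n"
  shows "S $$ (i,j) = S $$ (j,i)"
proof -
  have "transpose_mat S $$ (i,j) = S $$ (j,i)" using assms(1,3,4) by simp
  then show ?thesis using sym by simp
qed

lemma hf_pow_step:
  assumes S: "S \<in> carrier_mat n n" and sym: "transpose_mat S = S" and N: "nsq n y = 1"
  shows "(cmod (hfm n (S ^\<^sub>m k) y))\<^sup>2 \<le> cmod (hfm n (S ^\<^sub>m (k + k)) y)"
proof -
  have Sk: "S ^\<^sub>m k \<in> carrier_mat n n" using S by simp
  have symk: "\<And>i j. i < n \<Longrightarrow> j < n \<Longrightarrow> (S ^\<^sub>m k) $$ (i,j) = (S ^\<^sub>m k) $$ (j,i)"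
    by (rule sym_entry[OF Sk transpose_pow_sym[OF S sym]])
  have "(cmod (hfm n (S ^\<^sub>m k) y))\<^sup>2
     \<le> nsq n y * Re (hf n (\<lambda>i j. \<Sum>l<n. (S ^\<^sub>m k) $$ (i,l) * (S ^\<^sub>m k) $$ (l,j)) y)"
    by (rule hf_sq, rule symk)
  also have "hf n (\<lambda>i j. \<Sum>l<n. (S ^\<^sub>m k) $$ (i,l) * (S ^\<^sub>m k) $$ (l,j)) y
       = hfm n (S ^\<^sub>m k * S ^\<^sub>m k) y"
    unfolding hf_def by (intro sum.cong refl, simp add: mat_mult_entry[OF Sk Sk])
  also have "S ^\<^sub>m k * S ^\<^sub>m k = S ^\<^sub>m (k + k)" by (rule pow_add_mat[OF S])
  finally show ?thesis using N complex_Re_le_cmod by (simp add: order.trans)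
qed

lemma hf_pow_iter:
  assumes S: "S \<in> carrier_mat n n" and sym: "transpose_mat S = S" and N: "nsq n y = 1"
  shows "cmod (hfm n S y) ^ (2 ^ m) \<le> cmod (hfm n (S ^\<^sub>m (2 ^ m)) y)"
proof (induct m)
  case 0 then show ?case using S by simp
next
  case (Suc m)
  have "cmod (hfm n S y) ^ (2 ^ Suc m) = (cmod (hfm n S y) ^ (2 ^ m))\<^sup>2"
    by (simp add: power_mult[symmetric] mult.commute)
  also have "\<dots> \<le> (cmod (hfm n (S ^\<^sub>m (2 ^ m)) y))\<^sup>2"
    using Suc by (intro power_mono) auto
  also have "\<dots> \<le> cmod (hfm n (S ^\<^sub>m (2 ^ m + 2 ^ m)) y)"
    by (rule hf_pow_step[OF S sym N])
  finally show ?case by (simp add: mult_2)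
qed

lemma hf_bound:
  assumes c: "\<And>i j. i < n \<Longrightarrow> j < n \<Longrightarrow> \<bar>f i j\<bar> \<le> c"
  shows "cmod (hf n f y) \<le> c * real n * nsq n y"
proof -
  have c0: "n > 0 \<Longrightarrow> 0 \<le> c" using c[of 0 0] by auto
  have "cmod (hf n f y) \<le> (\<Sum>i<n. \<Sum>j<n. cmod (y$i) * c * cmod (y$j))"
    unfolding hf_def
  proof (rule order.trans[OF norm_sum], intro sum_mono, rule order.trans[OF norm_sum], intro sum_mono)
    fix i j assume "i \<in> {..<n}" "j \<in> {..<n}"
    then show "cmod (cnj (y $ i) * complex_of_real (f i j) * y $ j) \<le> cmod (y $ i) * c * cmod (y $ j)"
      using c by (simp add: norm_mult mult_mono mult_right_mono)
  qed
  also have "\<dots> = c * (\<Sum>i<n. 1 * cmod (y$i))\<^sup>2"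
    by (simp add: power2_eq_square sum_product sum_distrib_left mult_ac)
  also have "\<dots> \<le> c * ((\<Sum>i<n. 1\<^sup>2) * nsq n y)"
  proof (cases "n > 0")
    case True
    then show ?thesis unfolding nsq_def by (intro mult_left_mono my_CS c0)
  qed simp
  finally show ?thesis by simp
qed



lemma nsq_zero:
  assumes "nsq n y = 0" "i < n" shows "y $ i = 0"
proof -
  have "(\<forall>i\<in>{..<n}. (cmod (y$i))\<^sup>2 = 0)"
    using assms(1) unfolding nsq_def by (subst sum_nonneg_eq_0_iff[symmetric]) auto
  then show ?thesis using assms(2) by auto
qed

lemma hf_scale_vec:
  "hf n f (vec n (\<lambda>i. complex_of_real c * y $ i)) = complex_of_real (c\<^sup>2) * hf n f y"
  unfolding hf_def by (simp add: sum_distrib_left mult_ac power2_eq_square)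

lemma nsq_scale_vec:
  "nsq n (vec n (\<lambda>i. complex_of_real c * y $ i)) = c\<^sup>2 * nsq n y"
  unfolding nsq_def by (simp add: sum_distrib_left norm_mult power_mult_distrib)

lemma hf_le1:
  assumes S: "S \<in> carrier_mat n n" and sym: "transpose_mat S = S"
    and rho: "spectral_radius (map_mat complex_of_real S) < 1"
  shows "cmod (hfm n S y) \<le> nsq n y"
proof (cases "nsq n y = 0")
  case True
  then have "hfm n S y = 0" unfolding hf_def using nsq_zero[OF True] by simp
  then show ?thesis using True by simp
next
  case False
  define N where "N = nsq n y"
  have Npos: "N > 0" using False nsq_nonneg[of n y] unfolding N_def by linarith
  define z where "z = vec n (\<lambda>i. complex_of_real (1 / sqrt N) * y $ i)"
  have nz: "nsq n z = 1" unfolding z_def nsq_scale_vec N_def[symmetric] using Npos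
    by (simp add: field_simps)
  have hz: "hfm n S z = complex_of_real (1 / N) * hfm n S y"
  proof -
    have "(1 / sqrt N)\<^sup>2 = 1 / N" using Npos by (simp add: power_divide)
    then show ?thesis unfolding z_def hf_scale_vec by simp
  qed
  have mS: "map_mat complex_of_real S \<in> carrier_mat n n" using S by simp
  obtain c where c: "\<And>k. norm_bound (map_mat complex_of_real S ^\<^sub>m k) c"
    using spectral_radius_jnf_norm_bound_less_1_upper_triangular[OF mS rho] by blast
  have cb: "\<bar>(S ^\<^sub>m k) $$ (i,j)\<bar> \<le> c" if "i < n" "j < n" for k i j
  proof -
    have "map_mat complex_of_real S ^\<^sub>m k = map_mat complex_of_real (S ^\<^sub>m k)"
      by (rule of_real_hom.mat_hom_pow[OF S, symmetric])
    with c[of k] that S show ?thesis unfolding norm_bound_def by auto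
  qed
  have bnd: "cmod (hfm n S z) ^ (2 ^ m) \<le> c * real n" for m
  proof -
    have "cmod (hfm n S z) ^ (2 ^ m) \<le> cmod (hfm n (S ^\<^sub>m (2 ^ m)) z)"
      by (rule hf_pow_iter[OF S sym nz])
    also have "\<dots> \<le> c * real n * nsq n z"
      by (rule hf_bound, rule cb)
    finally show ?thesis using nz by simp
  qed
  have q1: "cmod (hfm n S z) \<le> 1"
  proof (rule ccontr)
    define q where "q = cmod (hfm n S z)"
    assume "\<not> cmod (hfm n S z) \<le> 1"
    then have q: "q > 1" unfolding q_def by simp
    obtain m :: nat where m: "real m > c * real n / (q - 1)"
      using reals_Archimedean2 by blast
    have "real m \<le> 2 ^ m"
    proof -
      have "m < 2 ^ m" by (rule less_exp)
      then have "real m < real (2 ^ m)" by linarith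
      then show ?thesis by simp
    qed
    then have "real m * (q - 1) \<le> 2 ^ m * (q - 1)" using q by (intro mult_right_mono) auto
    moreover have "c * real n < real m * (q - 1)" using m q by (simp add: field_simps)
    moreover have "1 + real (2 ^ m) * (q - 1) \<le> (1 + (q - 1)) ^ (2 ^ m)"
      by (rule Bernoulli_inequality) (use q in auto)
    moreover have "q ^ (2 ^ m) \<le> c * real n" using bnd[of m] unfolding q_def .
    ultimately show False by simp
  qed
  have "cmod (hfm n S y) = N * cmod (hfm n S z)"
    unfolding hz using Npos by (simp add: norm_mult norm_divide)
  also have "\<dots> \<le> N" using q1 Npos by (simp add: mult_le_cancel_left1)
  finally show ?thesis unfolding N_def .
qed



lemma spec_scale:
  assumes S: "S \<in> carrier_mat n n" and n: "n > 0" and r: "r > 0"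
    and lt: "spectral_radius (map_mat complex_of_real S) < r"
  shows "spectral_radius (map_mat complex_of_real ((1/r) \<cdot>\<^sub>m S)) < 1"
proof -
  let ?A = "map_mat complex_of_real S"
  let ?A' = "map_mat complex_of_real ((1/r) \<cdot>\<^sub>m S)"
  have A': "?A' \<in> carrier_mat n n" using S by simp
  have A: "?A \<in> carrier_mat n n" using S by simp
  from spectral_radius_mem_max(1)[OF A' n] obtain mu where
    mu: "eigenvalue ?A' mu" and eq: "spectral_radius ?A' = norm mu"
    unfolding spectrum_def by auto
  from mu obtain v where v: "eigenvector ?A' v mu" unfolding eigenvalue_def by auto
  then have vc: "v \<in> carrier_vec n" and v0: "v \<noteq> 0\<^sub>v n" and ev: "?A' *\<^sub>v v = mu \<cdot>\<^sub>v v"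
    unfolding eigenvector_def using A' by auto
  have "?A *\<^sub>v v = (complex_of_real r * mu) \<cdot>\<^sub>v v"
  proof (rule eq_vecI)
    fix i assume "i < dim_vec ((complex_of_real r * mu) \<cdot>\<^sub>v v)"
    then have i: "i < n" using vc by simp
    have "(?A' *\<^sub>v v) $ i = mu * v $ i" using ev i vc by simp
    moreover have "(?A' *\<^sub>v v) $ i = complex_of_real (1/r) * (?A *\<^sub>v v) $ i"
      using i S vc by (simp add: scalar_prod_def sum_distrib_left mult_ac)
    ultimately have e1: "mu * v $ i = complex_of_real (1/r) * (?A *\<^sub>v v) $ i" by simp
    have "(?A *\<^sub>v v) $ i = complex_of_real r * (complex_of_real (1/r) * (?A *\<^sub>v v) $ i)"
      using r by (simp add: mult.assoc[symmetric] of_real_mult[symmetric] del: of_real_mult)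
    then have "(?A *\<^sub>v v) $ i = complex_of_real r * (mu * v $ i)" unfolding e1 .
    then show "(?A *\<^sub>v v) $ i = ((complex_of_real r * mu) \<cdot>\<^sub>v v) $ i" using i vc by simp
  qed (use S vc in simp)
  then have "eigenvector ?A v (complex_of_real r * mu)"
    unfolding eigenvector_def using vc v0 A by auto
  then have "norm (complex_of_real r * mu) \<in> norm ` spectrum ?A"
    unfolding spectrum_def eigenvalue_def by auto
  from spectral_radius_mem_max(2)[OF A n this] have "r * norm mu \<le> spectral_radius ?A"
    using r by (simp add: norm_mult)
  with lt have "r * norm mu < r * 1" by simp
  then have "norm mu < 1" using r by (simp only: mult_less_cancel_left_pos)
  then show ?thesis using eq by simp
qed

lemma hf_rho:
  assumes S: "S \<in> carrier_mat n n" and sym: "transpose_mat S = S"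
  shows "cmod (hfm n S y) \<le> spectral_radius (map_mat complex_of_real S) * nsq n y"
proof (cases "n = 0")
  case True then show ?thesis unfolding hf_def nsq_def by simp
next
  case False
  then have n: "n > 0" by simp
  let ?rho = "spectral_radius (map_mat complex_of_real S)"
  have A: "map_mat complex_of_real S \<in> carrier_mat n n" using S by simp
  have rho0: "?rho \<ge> 0" using spectral_radius_mem_max(1)[OF A n] by auto
  have key: "cmod (hfm n S y) \<le> r * nsq n y" if r: "r > ?rho" for r
  proof -
    have rpos: "r > 0" using r rho0 by simp
    define S' where "S' = (1/r) \<cdot>\<^sub>m S"
    have S': "S' \<in> carrier_mat n n" unfolding S'_def using S by simp
    have sym': "transpose_mat S' = S'"
    proof (rule eq_matI)
      fix i j assume "i < dim_row S'" "j < dim_col S'"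
      then have ij: "i < n" "j < n" using S' by auto
      then show "transpose_mat S' $$ (i,j) = S' $$ (i,j)"
        unfolding S'_def using S sym_entry[OF S sym ij(2) ij(1)] by simp
    qed (use S' in auto)
    have rho': "spectral_radius (map_mat complex_of_real S') < 1"
      unfolding S'_def by (rule spec_scale[OF S n rpos r])
    have h: "hfm n S' y = complex_of_real (1/r) * hfm n S y"
      unfolding hf_def sum_distrib_left
      by (intro sum.cong refl, simp add: S'_def mult_ac, use S in auto)
    have "cmod (hfm n S' y) \<le> nsq n y" by (rule hf_le1[OF S' sym' rho'])
    then show ?thesis unfolding h using rpos by (simp add: norm_divide divide_le_eq mult.commute)
  qed
  show ?thesis
  proof (cases "nsq n y = 0")
    case True
    then have "hfm n S y = 0" unfolding hf_def using nsq_zero[OF True] by simp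
    then show ?thesis using True by simp
  next
    case False
    then have N: "nsq n y > 0" using nsq_nonneg[of n y] by linarith
    have "cmod (hfm n S y) / nsq n y \<le> ?rho"
    proof (rule dense_ge)
      fix r assume "?rho < r"
      from key[OF this] show "cmod (hfm n S y) / nsq n y \<le> r" using N
        by (simp add: divide_le_eq)
    qed
    then show ?thesis using N by (simp add: divide_le_eq)
  qed
qed



lemma final_arith:
  fixes rho beta t N x a b d :: real
  assumes rho: "rho > 0" and beta: "beta > 0" and br: "beta * rho < 1"
    and t0: "0 \<le> t" and t1: "t \<le> 1" and N: "N > 0" and x: "x > 0"
    and eq: "x * beta * b = N + t * beta * a" and bd: "b = 2 * a + d"
    and bb: "\<bar>b\<bar> \<le> rho * N" and db: "d \<le> rho * N"
  shows "x \<ge> 1/2 + (1 - beta * rho) / (beta * rho)"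
proof -
  have e: "1/2 + (1 - beta * rho) / (beta * rho) = 1 / (beta * rho) - 1/2"
    using rho beta by (simp add: field_simps)
  have brinv: "beta < 1 / rho" using br rho by (simp add: field_simps)
  have ta: "t * beta * a \<ge> (b - rho * N) / (2 * rho) \<and> t * beta * a \<ge> - (beta * rho * N)"
  proof (cases "a \<ge> 0")
    case True
    have "(b - rho * N) / (2 * rho) \<le> 0" using bb rho by (simp add: divide_le_0_iff)
    moreover have "0 \<le> t * beta * a" using True t0 beta by simp
    moreover have "- (beta * rho * N) \<le> 0" using beta rho N by simp
    ultimately show ?thesis by linarith
  next
    case False
    have a1: "t * (beta * a) \<ge> 1 * (beta * a)"
      using False beta t1 by (intro mult_right_mono_neg) (auto simp: mult_nonneg_nonpos)
    have a2: "beta * a \<ge> a / rho"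
    proof -
      have "beta * a \<ge> (1/rho) * a" using brinv False by (intro mult_right_mono_neg) auto
      then show ?thesis by simp
    qed
    have a3: "a \<ge> (b - rho * N) / 2" using bd db by simp
    have a4: "a / rho \<ge> (b - rho * N) / (2 * rho)"
    proof -
      have "(b - rho * N) / 2 / rho \<le> a / rho" using a3 rho by (intro divide_right_mono) auto
      then show ?thesis by simp
    qed
    have a5: "beta * a \<ge> - (beta * rho * N)"
    proof -
      have "a \<ge> - (rho * N)" using a3 bb by (simp add: abs_le_iff)
      then have "beta * (- (rho * N)) \<le> beta * a" using beta by (intro mult_left_mono) auto
      then show ?thesis by (simp add: mult.assoc)
    qed
    show ?thesis using a1 a2 a4 a5 by (simp add: mult.assoc)
  qed
  show ?thesis
  proof (cases "b > 0")
    case False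
    have "x * beta * b \<le> 0" using False x beta by (simp add: mult_nonneg_nonpos)
    moreover have "beta * rho * N < N" using br N by simp
    ultimately show ?thesis using eq ta by linarith
  next
    case True
    have "N \<ge> b / rho" using bb rho by (simp add: field_simps)
    have "x * (beta * b) \<ge> b / rho - beta * b / 2"
    proof -
      have "N + t * beta * a - b / rho + beta * b / 2 \<ge> N / 2 - b / (2 * rho) + beta * b / 2"
      proof -
        have "(b - rho*N)/(2*rho) = b/(2*rho) - N/2" using rho by (simp add: field_simps)
        moreover have "b / rho = 2 * (b / (2 * rho))" by simp
        ultimately show ?thesis using ta by linarith
      qed
      moreover have "N / 2 - b / (2 * rho) \<ge> 0" using bb rho by (simp add: field_simps)
      moreover have "beta * b / 2 \<ge> 0" using beta True by simp
      ultimately show ?thesis using eq by (simp add: mult.assoc)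
    qed
    then have "x \<ge> (b / rho - beta * b / 2) / (beta * b)"
      using beta True by (simp add: divide_le_eq mult.commute)
    also have "(b / rho - beta * b / 2) / (beta * b) = 1 / (beta * rho) - 1/2"
      using beta True rho by (simp add: field_simps)
    finally show ?thesis using e by simp
  qed
qed



lemma hf_cong: "(\<And>i j. i < n \<Longrightarrow> j < n \<Longrightarrow> f i j = g i j) \<Longrightarrow> hf n f y = hf n g y"
  unfolding hf_def by (intro sum.cong refl) auto

lemma hf_add: "hf n (\<lambda>i j. f i j + g i j) y = hf n f y + hf n g y"
  unfolding hf_def by (simp add: sum.distrib algebra_simps)

lemma hf_smult: "hf n (\<lambda>i j. c * f i j) y = complex_of_real c * hf n f y"
  unfolding hf_def by (simp add: sum_distrib_left mult_ac)

lemma hf_transp: "hf n (\<lambda>i j. f j i) y = cnj (hf n f y)"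
proof -
  have "cnj (hf n f y) = (\<Sum>i<n. \<Sum>j<n. y$i * complex_of_real (f i j) * cnj (y$j))"
    unfolding hf_def by simp
  also have "\<dots> = (\<Sum>j<n. \<Sum>i<n. y$i * complex_of_real (f i j) * cnj (y$j))"
    by (rule sum.swap)
  also have "\<dots> = hf n (\<lambda>i j. f j i) y" unfolding hf_def
    by (intro sum.cong refl, simp add: mult.commute mult.left_commute)
  finally show ?thesis by simp
qed

lemma hf_id: "hf n (\<lambda>i j. if i = j then 1 else 0) y = complex_of_real (nsq n y)"
proof -
  have "hf n (\<lambda>i j. if i = j then 1 else 0) y = (\<Sum>i<n. cnj (y$i) * y$i)"
    unfolding hf_def
  proof (intro sum.cong refl)
    fix i assume i: "i \<in> {..<n}"
    have "(\<Sum>j<n. cnj (y$i) * complex_of_real (if i = j then 1 else 0) * y$j)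
        = (\<Sum>j<n. if i = j then cnj (y$i) * y$j else 0)"
      by (intro sum.cong refl) auto
    also have "\<dots> = cnj (y$i) * y$i" using i by (simp add: sum.delta)
    finally show "(\<Sum>j<n. cnj (y$i) * complex_of_real (if i = j then 1 else 0) * y$j) = cnj (y$i) * y$i" .
  qed
  also have "\<dots> = (\<Sum>i<n. complex_of_real ((cmod (y$i))\<^sup>2))"
    by (intro sum.cong refl, simp add: complex_norm_square mult.commute del: of_real_power)
  finally show ?thesis unfolding nsq_def by simp
qed

lemma hf_blockdiag:
  fixes bo :: "nat \<Rightarrow> nat"
  assumes S: "S \<in> carrier_mat n n" and sym: "transpose_mat S = S"
  shows "Re (hf n (\<lambda>i j. if bo i = bo j then S $$ (i,j) else 0) v)
      \<le> spectral_radius (map_mat complex_of_real S) * nsq n v"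
proof -
  let ?rho = "spectral_radius (map_mat complex_of_real S)"
  define K where "K = bo ` {..<n}"
  have K: "finite K" unfolding K_def by simp
  define P where "P s = vec n (\<lambda>i. if bo i = s then v$i else 0)" for s
  have e1: "hf n (\<lambda>i j. if bo i = bo j then S $$ (i,j) else 0) v = (\<Sum>s\<in>K. hfm n S (P s))"
  proof -
    have "(\<Sum>s\<in>K. hfm n S (P s)) = (\<Sum>s\<in>K. \<Sum>i<n. \<Sum>j<n.
        (if s = bo i then (if bo j = bo i then cnj (v$i) * complex_of_real (S $$ (i,j)) * v$j else 0) else 0))"
      unfolding hf_def P_def by (intro sum.cong refl) auto
    also have "\<dots> = (\<Sum>i<n. \<Sum>s\<in>K. \<Sum>j<n.
        (if s = bo i then (if bo j = bo i then cnj (v$i) * complex_of_real (S $$ (i,j)) * v$j else 0) else 0))"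
      by (rule sum.swap)
    also have "\<dots> = (\<Sum>i<n. \<Sum>j<n. \<Sum>s\<in>K.
        (if s = bo i then (if bo j = bo i then cnj (v$i) * complex_of_real (S $$ (i,j)) * v$j else 0) else 0))"
      by (intro sum.cong refl sum.swap)
    also have "\<dots> = hf n (\<lambda>i j. if bo i = bo j then S $$ (i,j) else 0) v"
      unfolding hf_def
    proof (intro sum.cong refl)
      fix i j assume i: "i \<in> {..<n}"
      have "bo i \<in> K" using i unfolding K_def by auto
      then show "(\<Sum>s\<in>K. (if s = bo i then (if bo j = bo i then cnj (v$i) * complex_of_real (S $$ (i,j)) * v$j else 0) else 0))
        = cnj (v $ i) * complex_of_real (if bo i = bo j then S $$ (i, j) else 0) * v $ j"
        using K by (simp add: sum.delta)
    qed
    finally show ?thesis by simp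
  qed
  have e2: "(\<Sum>s\<in>K. nsq n (P s)) = nsq n v"
  proof -
    have "(\<Sum>s\<in>K. nsq n (P s)) = (\<Sum>s\<in>K. \<Sum>i<n. (if s = bo i then (cmod (v$i))\<^sup>2 else 0))"
      unfolding nsq_def P_def by (intro sum.cong refl) auto
    also have "\<dots> = (\<Sum>i<n. \<Sum>s\<in>K. (if s = bo i then (cmod (v$i))\<^sup>2 else 0))"
      by (rule sum.swap)
    also have "\<dots> = nsq n v" unfolding nsq_def
    proof (intro sum.cong refl)
      fix i assume i: "i \<in> {..<n}"
      have "bo i \<in> K" using i unfolding K_def by auto
      then show "(\<Sum>s\<in>K. (if s = bo i then (cmod (v$i))\<^sup>2 else 0)) = (cmod (v$i))\<^sup>2"
        using K by (simp add: sum.delta)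
    qed
    finally show ?thesis .
  qed
  have "Re (hf n (\<lambda>i j. if bo i = bo j then S $$ (i,j) else 0) v)
      \<le> cmod (\<Sum>s\<in>K. hfm n S (P s))" unfolding e1 by (rule complex_Re_le_cmod)
  also have "\<dots> \<le> (\<Sum>s\<in>K. cmod (hfm n S (P s)))" by (rule norm_sum)
  also have "\<dots> \<le> (\<Sum>s\<in>K. ?rho * nsq n (P s))" by (intro sum_mono hf_rho[OF S sym])
  also have "\<dots> = ?rho * nsq n v" unfolding e2[symmetric] by (simp add: sum_distrib_left)
  finally show ?thesis .
qed



theorem lemma13:
  fixes B :: "real mat" and ns :: "nat list" and n :: nat
    and \<beta> t :: real and lam :: complex
  assumes ns_pos: "\<forall>s \<in> set ns. 0 < s"
    and ns_sum: "sum_list ns = n"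
    and B_dim: "B \<in> carrier_mat n n"
    and B_sym: "transpose_mat B = B"
    and B_inv: "invertible_mat B"
    and beta_pos: "0 < \<beta>"
    and beta_lt: "\<beta> < 1 / spectral_radius (map_mat complex_of_real B)"
    and t_range: "0 \<le> t" "t \<le> 1"
    and eig: "eigenvalue (map_mat complex_of_real
                 (inv_mat (\<beta> \<cdot>\<^sub>m B) * (1\<^sub>m n + (t * \<beta>) \<cdot>\<^sub>m block_strict_upper ns B))) lam"
    and re_pos: "Re lam > 0"
  shows "Re lam \<ge> 1/2 + (1 - \<beta> * spectral_radius (map_mat complex_of_real B))
                        / (\<beta> * spectral_radius (map_mat complex_of_real B))
       \<and> 1/2 + (1 - \<beta> * spectral_radius (map_mat complex_of_real B))
                        / (\<beta> * spectral_radius (map_mat complex_of_real B)) > 1/2"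
proof -
  let ?rho = "spectral_radius (map_mat complex_of_real B)"
  define U where "U = block_strict_upper ns B"
  define N where "N = 1\<^sub>m n + (t * \<beta>) \<cdot>\<^sub>m U"
  have U: "U \<in> carrier_mat n n" unfolding U_def block_strict_upper_def using B_dim by auto
  have Uent: "U $$ (i,j) = (if block_of ns i < block_of ns j then B $$ (i,j) else 0)"
    if "i < n" "j < n" for i j
    unfolding U_def block_strict_upper_def using that B_dim by auto
  have Nc: "N \<in> carrier_mat n n" unfolding N_def using U by simp
  have Nent: "N $$ (i,j) = (if i = j then 1 else 0) + (t * \<beta>) * U $$ (i,j)"
    if "i < n" "j < n" for i j
    unfolding N_def using that U by simp
  from B_inv obtain B' where BB': "B * B' = 1\<^sub>m n" and B'B: "B' * B = 1\<^sub>m (dim_row B')"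
    unfolding invertible_mat_def inverts_mat_def using B_dim by auto
  have B'c: "B' \<in> carrier_mat n n"
  proof -
    have "dim_col (B * B') = n" using BB' by simp
    then have c: "dim_col B' = n" by simp
    have "dim_col (B' * B) = dim_row B'" using B'B by simp
    then have "dim_row B' = n" using B_dim by simp
    with c show ?thesis by auto
  qed
  let ?bB = "\<beta> \<cdot>\<^sub>m B"
  have bBc: "?bB \<in> carrier_mat n n" using B_dim by simp
  have inv1: "?bB * ((1/\<beta>) \<cdot>\<^sub>m B') = 1\<^sub>m n"
  proof -
    have "?bB * ((1/\<beta>) \<cdot>\<^sub>m B') = (1/\<beta>) \<cdot>\<^sub>m (\<beta> \<cdot>\<^sub>m (B * B'))"
      using B_dim B'c by (simp add: mult_smult_assoc_mat[of _ n n _ n] mult_smult_distrib[of _ n n _ n])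
    also have "\<dots> = 1\<^sub>m n" unfolding BB' using beta_pos by (intro eq_matI) auto
    finally show ?thesis .
  qed
  have inv2: "((1/\<beta>) \<cdot>\<^sub>m B') * ?bB = 1\<^sub>m n"
  proof -
    have "((1/\<beta>) \<cdot>\<^sub>m B') * ?bB = \<beta> \<cdot>\<^sub>m ((1/\<beta>) \<cdot>\<^sub>m (B' * B))"
      using B_dim B'c by (simp add: mult_smult_assoc_mat[of _ n n _ n] mult_smult_distrib[of _ n n _ n])
    also have "\<dots> = 1\<^sub>m n" unfolding B'B using beta_pos B'c by (intro eq_matI) auto
    finally show ?thesis .
  qed
  have units: "?bB \<in> Units (ring_mat TYPE(real) n ())"
    unfolding Units_def ring_mat_def using bBc inv1 inv2 B'c
    by (auto intro!: bexI[of _ "(1/\<beta>) \<cdot>\<^sub>m B'"])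
  obtain X where X: "mat_inverse ?bB = Some X"
  proof (cases "mat_inverse ?bB")
    case None
    from mat_inverse(1)[OF bBc None, of "()"] units show ?thesis by blast
  qed auto
  from mat_inverse(2)[OF bBc X] have bBX: "?bB * X = 1\<^sub>m n" and Xc: "X \<in> carrier_mat n n" by auto
  have invX: "inv_mat ?bB = X" unfolding inv_mat_def X by simp
  define M where "M = X * N"
  have Mc: "M \<in> carrier_mat n n" unfolding M_def using Xc Nc by simp
  from eig obtain v where ev: "eigenvector (map_mat complex_of_real M) v lam"
    unfolding eigenvalue_def M_def N_def U_def invX by auto
  then have vc: "v \<in> carrier_vec n" and v0: "v \<noteq> 0\<^sub>v n"
    and Mv: "map_mat complex_of_real M *\<^sub>v v = lam \<cdot>\<^sub>v v"
    unfolding eigenvector_def using Mc by auto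
  have n0: "n > 0" using vc v0 by (cases n) auto
  have mB: "map_mat complex_of_real B \<in> carrier_mat n n" using B_dim by simp
  have rho0: "?rho \<ge> 0" using spectral_radius_mem_max(1)[OF mB n0] by auto
  have rhopos: "?rho > 0"
  proof (rule ccontr)
    assume "\<not> ?rho > 0"
    then have "?rho = 0" using rho0 by simp
    then show False using beta_lt beta_pos by simp
  qed
  have brho: "\<beta> * ?rho < 1" using beta_lt rhopos by (simp add: field_simps)
  have bXN: "?bB * M = N" unfolding M_def
    using bBc Xc Nc bBX by (simp add: assoc_mult_mat[symmetric, of _ n n _ n _ n])
  have veq: "map_mat complex_of_real ?bB *\<^sub>v (lam \<cdot>\<^sub>v v) = map_mat complex_of_real N *\<^sub>v v"
  proof -
    have "map_mat complex_of_real ?bB *\<^sub>v (lam \<cdot>\<^sub>v v)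
        = map_mat complex_of_real ?bB *\<^sub>v (map_mat complex_of_real M *\<^sub>v v)" using Mv by simp
    also have "\<dots> = (map_mat complex_of_real ?bB * map_mat complex_of_real M) *\<^sub>v v"
      using bBc Mc vc by (simp add: assoc_mult_mat_vec[of _ n n _ n])
    also have "map_mat complex_of_real ?bB * map_mat complex_of_real M = map_mat complex_of_real (?bB * M)"
      by (rule of_real_hom.mat_hom_mult[OF bBc Mc, symmetric])
    finally show ?thesis unfolding bXN .
  qed
  have comp: "(\<Sum>j<n. complex_of_real (\<beta> * B $$ (i,j)) * (lam * v$j))
      = (\<Sum>j<n. complex_of_real (N $$ (i,j)) * v$j)" if i: "i < n" for i
  proof -
    have "(map_mat complex_of_real ?bB *\<^sub>v (lam \<cdot>\<^sub>v v)) $ i = (map_mat complex_of_real N *\<^sub>v v) $ i"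
      using veq by simp
    then show ?thesis using i B_dim Nc vc by (simp add: scalar_prod_def atLeast0LessThan)
  qed
  define N0 where "N0 = nsq n v"
  have hfeq: "lam * complex_of_real \<beta> * hfm n B v = complex_of_real N0 + complex_of_real (t * \<beta>) * hfm n U v"
  proof -
    have "lam * complex_of_real \<beta> * hfm n B v
        = (\<Sum>i<n. cnj (v$i) * (\<Sum>j<n. complex_of_real (\<beta> * B $$ (i,j)) * (lam * v$j)))"
      unfolding hf_def by (simp add: sum_distrib_left mult_ac)
    also have "\<dots> = (\<Sum>i<n. cnj (v$i) * (\<Sum>j<n. complex_of_real (N $$ (i,j)) * v$j))"
    proof (intro sum.cong refl)
      fix i assume "i \<in> {..<n}"
      then have "(\<Sum>j<n. complex_of_real (\<beta> * B $$ (i,j)) * (lam * v$j))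
          = (\<Sum>j<n. complex_of_real (N $$ (i,j)) * v$j)" using comp by simp
      then show "cnj (v$i) * (\<Sum>j<n. complex_of_real (\<beta> * B $$ (i,j)) * (lam * v$j))
          = cnj (v$i) * (\<Sum>j<n. complex_of_real (N $$ (i,j)) * v$j)" by (simp only:)
    qed
    also have "\<dots> = hf n (\<lambda>i j. N $$ (i,j)) v"
      unfolding hf_def by (simp add: sum_distrib_left mult_ac)
    also have "\<dots> = hf n (\<lambda>i j. (if i = j then 1 else 0) + (t * \<beta>) * U $$ (i,j)) v"
      by (rule hf_cong, simp add: Nent)
    also have "\<dots> = complex_of_real N0 + complex_of_real (t * \<beta>) * hfm n U v"
      unfolding hf_add hf_smult hf_id N0_def ..
    finally show ?thesis .
  qed
  define bo where "bo = block_of ns"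
  define d where "d = Re (hf n (\<lambda>i j. if bo i = bo j then B $$ (i,j) else 0) v)"
  define a where "a = Re (hfm n U v)"
  define b where "b = Re (hfm n B v)"
  have symB: "\<And>i j. i < n \<Longrightarrow> j < n \<Longrightarrow> B $$ (i,j) = B $$ (j,i)"
    by (rule sym_entry[OF B_dim B_sym])
  have hB: "hfm n B v = complex_of_real b"
    using hf_Im[of n "\<lambda>i j. B $$ (i,j)" v, OF symB] unfolding b_def by (simp add: complex_eq_iff)
  have dec: "hfm n B v = hfm n U v + hf n (\<lambda>i j. U $$ (j,i)) v
      + hf n (\<lambda>i j. if bo i = bo j then B $$ (i,j) else 0) v"
  proof -
    have "hfm n B v = hf n (\<lambda>i j. (U $$ (i,j) + U $$ (j,i)) + (if bo i = bo j then B $$ (i,j) else 0)) v"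
    proof (rule hf_cong)
      fix i j assume ij: "i < n" "j < n"
      show "B $$ (i,j) = (U $$ (i,j) + U $$ (j,i)) + (if bo i = bo j then B $$ (i,j) else 0)"
        using Uent[OF ij] Uent[OF ij(2) ij(1)] symB[OF ij] unfolding bo_def by auto
    qed
    then show ?thesis unfolding hf_add .
  qed
  have bd: "b = 2 * a + d"
  proof -
    have e: "hf n (\<lambda>i j. U $$ (j,i)) v = cnj (hfm n U v)" by (rule hf_transp)
    have "Re (hfm n B v) = 2 * Re (hfm n U v) + Re (hf n (\<lambda>i j. if bo i = bo j then B $$ (i,j) else 0) v)"
      unfolding dec e by simp
    then show ?thesis unfolding a_def b_def d_def .
  qed
  have bb: "\<bar>b\<bar> \<le> ?rho * N0"
  proof -
    have "cmod (hfm n B v) \<le> ?rho * nsq n v" by (rule hf_rho[OF B_dim B_sym])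
    then show ?thesis unfolding hB N0_def by simp
  qed
  have db: "d \<le> ?rho * N0"
    unfolding d_def N0_def using hf_blockdiag[OF B_dim B_sym, of bo v] .
  have N0pos: "N0 > 0"
  proof -
    have "N0 \<noteq> 0"
    proof
      assume "N0 = 0"
      then have "\<And>i. i < n \<Longrightarrow> v $ i = 0" using nsq_zero unfolding N0_def by blast
      then have "v = 0\<^sub>v n" using vc by (intro eq_vecI) auto
      with v0 show False by simp
    qed
    then show ?thesis using nsq_nonneg[of n v] unfolding N0_def by linarith
  qed
  have req: "Re lam * \<beta> * b = N0 + t * \<beta> * a"
    using arg_cong[OF hfeq, of Re] unfolding hB a_def by simp
  have main: "Re lam \<ge> 1/2 + (1 - \<beta> * ?rho) / (\<beta> * ?rho)"
    by (rule final_arith[OF rhopos beta_pos brho t_range N0pos re_pos req bd bb db])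
  have "(1 - \<beta> * ?rho) / (\<beta> * ?rho) > 0"
    using brho beta_pos rhopos by (simp add: divide_pos_pos)
  with main show ?thesis by simp
qed

end
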